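(* For finite asynchronous CCS, let $L_A$ be the set of labels of the transition system $A_I$ of the shape $-$ and $-\mid a.T_1$, for $a$ a channel name and $T_1$ a pure process. Then $L_A$-bisimilarity coincides with asynchronous bisimilarity: $\sim^{L_A}=\sim^A$.
   Context: Finite asynchronous CCS: names $a,b,\dots$; pure processes $P::=M\mid\bar a\mid(\nu a)P\mid P_1|P_2$ with summations $M::=\mathbf{0}\mid\tau.P\mid a.P\mid M_1+M_2$; extended processes also allow process variables $X$. Structural congruence $\equiv$: smallest congruence with $|$ commutative, associative, unit $\mathbf{0}$; $+$ commutative, associative, unit $\mathbf{0}$; $(\nu a)(\nu b)P\equiv(\nu b)(\nu a)P$; $(\nu a)(P|Q)\equiv P|(\nu a)Q$ if $a\notin fn(P)$; $\alpha$-conversion. Reduction $\rightsquigarrow$ (up to $\equiv$): $(a.P+M)|\bar a\rightsquigarrow P$, $\tau.P+M\rightsquigarrow P$, closed under $(\nu a)-$ and $-|R$. Ordinary LTS (up to $\equiv$), $\mu\in\{\tau,a,\bar a\}$: $a.P+M\xrightarrow{a}P$; $\tau.P+M\xrightarrow{\tau}P$; $\bar a\xrightarrow{\bar a}\mathbf{0}$; $P\xrightarrow{\mu}Q$ implies $(\nu a)P\xrightarrow{\mu}(\nu a)Q$ if $a\notin n(\mu)$ and $P|R\xrightarrow{\mu}Q|R$; $P\xrightarrow{a}P_1$, $Q\xrightarrow{\bar a}Q_1$ imply $P|Q\xrightarrow{\tau}P_1|Q_1$ (parallel composition commutative). Asynchronous bisimilarity $\sim^A$ is the largest symmetric relation $\mathcal{R}$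 such that if $P\,\mathcal{R}\,Q$: $P\xrightarrow{\tau}P'$ implies $Q\xrightarrow{\tau}Q'$ with $P'\,\mathcal{R}\,Q'$; $P\xrightarrow{\bar a}P'$ implies $Q\xrightarrow{\bar a}Q'$ with $P'\,\mathcal{R}\,Q'$; $P\xrightarrow{a}P'$ implies either $Q\xrightarrow{a}Q'$ with $P'\,\mathcal{R}\,Q'$ or $Q\xrightarrow{\tau}Q'$ with $P'\,\mathcal{R}\,Q'|\bar a$. The LTS $A$: (Tau) $P\rightsquigarrow Q$ gives $P\xrightarrow{-}Q$; (Rcv) $P\equiv(\nu A)(a.Q+M|R)$, $a\notin A$ gives $P\xrightarrow{-|\bar a}(\nu A)(Q|R)$; (Snd) $P\equiv(\nu A)(\bar a|Q)$, $a\notin A$ gives $P\xrightarrow{-|a.X_1}(\nu A)(Q|X_1)$. $A_I$ instantiates the process variable: $P\xrightarrow{C[-]}_{A_I}Q$ iff $P\xrightarrow{C_\epsilon[-]}Q_\epsilon$ in $A$ and a capture-avoiding substitution $\sigma$ of a pure process for $X_1$ has $Q_\epsilon\sigma\equiv Q$, $C_\epsilon[-]\sigma=C[-]$. For a set $L$ of labels, an $L$-bisimulation is a symmetric relation $\mathcal{R}$ such that if $P\,\mathcal{R}\,Q$ and $P\xrightarrow{C[-]}_{A_I}P'$ then: if $C[-]\in L$, $Q\xrightarrow{C[-]}_{A_I}Q'$ with $P'\,\mathcal{R}\,Q'$; otherwise $C[Q]\rightsquigarrow Q'$ with $P'\,\mathcal{R}\,Q'$. $\sim^L$ is the largest $L$-bisimulation.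 *)

theory Defs
  imports Main
begin

type_synonym name = nat

datatype proc =
    Sum summ
  | Out name
  | Res name proc
  | Par proc proc
  | Var nat
and summ =
    SNil
  | STau proc
  | SIn name proc
  | SChoice summ summ

abbreviation Zero :: proc where "Zero \<equiv> Sum SNil"

primrec pure :: "proc \<Rightarrow> bool" and pure_s :: "summ \<Rightarrow> bool" where
  "pure (Sum M) = pure_s M"
| "pure (Out a) = True"
| "pure (Res a P) = pure P"
| "pure (Par P Q) = (pure P \<and> pure Q)"
| "pure (Var n) = False"
| "pure_s SNil = True"
| "pure_s (STau P) = pure P"
| "pure_s (SIn a P) = pure P"
| "pure_s (SChoice M N) = (pure_s M \<and> pure_s N)"

primrec fn :: "proc \<Rightarrow> name set" and fn_s :: "summ \<Rightarrow> name set" where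
  "fn (Sum M) = fn_s M"
| "fn (Out a) = {a}"
| "fn (Res a P) = fn P - {a}"
| "fn (Par P Q) = fn P \<union> fn Q"
| "fn (Var n) = {}"
| "fn_s SNil = {}"
| "fn_s (STau P) = fn P"
| "fn_s (SIn a P) = insert a (fn P)"
| "fn_s (SChoice M N) = fn_s M \<union> fn_s N"

definition swapn :: "name \<Rightarrow> name \<Rightarrow> name \<Rightarrow> name" where
  "swapn a b c = (if c = a then b else if c = b then a else c)"

primrec pswap :: "name \<Rightarrow> name \<Rightarrow> proc \<Rightarrow> proc" and sswap :: "name \<Rightarrow> name \<Rightarrow> summ \<Rightarrow> summ" where
  "pswap a b (Sum M) = Sum (sswap a b M)"
| "pswap a b (Out c) = Out (swapn a b c)"
| "pswap a b (Res c P) = Res (swapn a b c) (pswap a b P)"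
| "pswap a b (Par P Q) = Par (pswap a b P) (pswap a b Q)"
| "pswap a b (Var n) = Var n"
| "sswap a b SNil = SNil"
| "sswap a b (STau P) = STau (pswap a b P)"
| "sswap a b (SIn c P) = SIn (swapn a b c) (pswap a b P)"
| "sswap a b (SChoice M N) = SChoice (sswap a b M) (sswap a b N)"

inductive scong :: "proc \<Rightarrow> proc \<Rightarrow> bool" (infix "\<equiv>\<^sub>s" 50)
  and scong_s :: "summ \<Rightarrow> summ \<Rightarrow> bool" (infix "\<equiv>\<^sub>m" 50) where
  refl: "P \<equiv>\<^sub>s P"
| sym: "P \<equiv>\<^sub>s Q \<Longrightarrow> Q \<equiv>\<^sub>s P"
| trans: "P \<equiv>\<^sub>s Q \<Longrightarrow> Q \<equiv>\<^sub>s R \<Longrightarrow> P \<equiv>\<^sub>s R"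
| refl_s: "M \<equiv>\<^sub>m M"
| sym_s: "M \<equiv>\<^sub>m N \<Longrightarrow> N \<equiv>\<^sub>m M"
| trans_s: "M \<equiv>\<^sub>m N \<Longrightarrow> N \<equiv>\<^sub>m K \<Longrightarrow> M \<equiv>\<^sub>m K"
| cong_Sum: "M \<equiv>\<^sub>m N \<Longrightarrow> Sum M \<equiv>\<^sub>s Sum N"
| cong_Res: "P \<equiv>\<^sub>s Q \<Longrightarrow> Res a P \<equiv>\<^sub>s Res a Q"
| cong_Par: "P \<equiv>\<^sub>s P' \<Longrightarrow> Q \<equiv>\<^sub>s Q' \<Longrightarrow> Par P Q \<equiv>\<^sub>s Par P' Q'"
| cong_Tau: "P \<equiv>\<^sub>s Q \<Longrightarrow> STau P \<equiv>\<^sub>m STau Q"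
| cong_In: "P \<equiv>\<^sub>s Q \<Longrightarrow> SIn a P \<equiv>\<^sub>m SIn a Q"
| cong_Choice: "M \<equiv>\<^sub>m M' \<Longrightarrow> N \<equiv>\<^sub>m N' \<Longrightarrow> SChoice M N \<equiv>\<^sub>m SChoice M' N'"
| par_comm: "Par P Q \<equiv>\<^sub>s Par Q P"
| par_assoc: "Par (Par P Q) R \<equiv>\<^sub>s Par P (Par Q R)"
| par_unit: "Par P Zero \<equiv>\<^sub>s P"
| choice_comm: "SChoice M N \<equiv>\<^sub>m SChoice N M"
| choice_assoc: "SChoice (SChoice M N) K \<equiv>\<^sub>m SChoice M (SChoice N K)"
| choice_unit: "SChoice M SNil \<equiv>\<^sub>m M"
| res_swap: "Res a (Res b P) \<equiv>\<^sub>s Res b (Res a P)"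
| res_extr: "a \<notin> fn P \<Longrightarrow> Res a (Par P Q) \<equiv>\<^sub>s Par P (Res a Q)"
| alpha: "b \<notin> fn (Res a P) \<Longrightarrow> Res a P \<equiv>\<^sub>s Res b (pswap a b P)"

definition ress :: "name list \<Rightarrow> proc \<Rightarrow> proc" where
  "ress A P = foldr Res A P"

inductive red :: "proc \<Rightarrow> proc \<Rightarrow> bool" where
  comm: "red (Par (Sum (SChoice (SIn a P) M)) (Out a)) P"
| tau: "red (Sum (SChoice (STau P) M)) P"
| res: "red P Q \<Longrightarrow> red (Res a P) (Res a Q)"
| par: "red P Q \<Longrightarrow> red (Par P R) (Par Q R)"
| struct: "P \<equiv>\<^sub>s P' \<Longrightarrow> red P' Q' \<Longrightarrow> Q' \<equiv>\<^sub>s Q \<Longrightarrow> red P Q"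

datatype act = ATau | AIn name | AOut name

primrec act_names :: "act \<Rightarrow> name set" where
  "act_names ATau = {}"
| "act_names (AIn a) = {a}"
| "act_names (AOut a) = {a}"

inductive trans :: "proc \<Rightarrow> act \<Rightarrow> proc \<Rightarrow> bool" where
  t_in: "trans (Sum (SChoice (SIn a P) M)) (AIn a) P"
| t_tau: "trans (Sum (SChoice (STau P) M)) ATau P"
| t_out: "trans (Out a) (AOut a) Zero"
| t_res: "trans P \<mu> Q \<Longrightarrow> a \<notin> act_names \<mu> \<Longrightarrow> trans (Res a P) \<mu> (Res a Q)"
| t_par: "trans P \<mu> Q \<Longrightarrow> trans (Par P R) \<mu> (Par Q R)"
| t_comm: "trans P (AIn a) P1 \<Longrightarrow> trans Q (AOut a) Q1 \<Longrightarrow> trans (Par P Q) ATau (Par P1 Q1)"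
| t_struct: "P \<equiv>\<^sub>s P' \<Longrightarrow> trans P' \<mu> Q' \<Longrightarrow> Q' \<equiv>\<^sub>s Q \<Longrightarrow> trans P \<mu> Q"

definition async_bisimulation :: "(proc \<Rightarrow> proc \<Rightarrow> bool) \<Rightarrow> bool" where
  "async_bisimulation R \<longleftrightarrow>
     (\<forall>P Q. R P Q \<longrightarrow> R Q P) \<and>
     (\<forall>P Q. R P Q \<longrightarrow>
        (\<forall>P'. trans P ATau P' \<longrightarrow> (\<exists>Q'. trans Q ATau Q' \<and> R P' Q')) \<and>
        (\<forall>a P'. trans P (AOut a) P' \<longrightarrow> (\<exists>Q'. trans Q (AOut a) Q' \<and> R P' Q')) \<and>
        (\<forall>a P'. trans P (AIn a) P' \<longrightarrow>
            ((\<exists>Q'. trans Q (AIn a) Q' \<and> R P' Q') \<or>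
             (\<exists>Q'. trans Q ATau Q' \<and> R P' (Par Q' (Out a))))))"

definition async_bisim :: "proc \<Rightarrow> proc \<Rightarrow> bool" where
  "async_bisim P Q \<longleftrightarrow> (\<exists>R. async_bisimulation R \<and> R P Q)"

text \<open>Labels are contexts: either the hole "-" or "- | R".\<close>
datatype ctx = Hole | HolePar proc

primrec fill :: "ctx \<Rightarrow> proc \<Rightarrow> proc" where
  "fill Hole Q = Q"
| "fill (HolePar R) Q = Par Q R"

text \<open>The process variable X_1 is Var 1.\<close>
inductive ltsA :: "proc \<Rightarrow> ctx \<Rightarrow> proc \<Rightarrow> bool" where
  A_tau: "red P Q \<Longrightarrow> ltsA P Hole Q"
| A_rcv: "P \<equiv>\<^sub>s ress A (Par (Sum (SChoice (SIn a Q) M)) R) \<Longrightarrow> a \<notin> set A \<Longrightarrow>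
          ltsA P (HolePar (Out a)) (ress A (Par Q R))"
| A_snd: "P \<equiv>\<^sub>s ress A (Par (Out a) Q) \<Longrightarrow> a \<notin> set A \<Longrightarrow>
          ltsA P (HolePar (Sum (SIn a (Var 1)))) (ress A (Par Q (Var 1)))"

text \<open>Substitution of T for X_1 (naive), together with the condition that it is
  capture-avoiding: no binder above an occurrence of X_1 binds a free name of T.\<close>
primrec subst :: "proc \<Rightarrow> proc \<Rightarrow> proc" and subst_s :: "proc \<Rightarrow> summ \<Rightarrow> summ" where
  "subst T (Sum M) = Sum (subst_s T M)"
| "subst T (Out a) = Out a"
| "subst T (Res a P) = Res a (subst T P)"
| "subst T (Par P Q) = Par (subst T P) (subst T Q)"
| "subst T (Var n) = (if n = 1 then T else Var n)"
| "subst_s T SNil = SNil"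
| "subst_s T (STau P) = STau (subst T P)"
| "subst_s T (SIn a P) = SIn a (subst T P)"
| "subst_s T (SChoice M N) = SChoice (subst_s T M) (subst_s T N)"

primrec capt_free :: "proc \<Rightarrow> name set \<Rightarrow> proc \<Rightarrow> bool"
  and capt_free_s :: "proc \<Rightarrow> name set \<Rightarrow> summ \<Rightarrow> bool" where
  "capt_free T B (Sum M) = capt_free_s T B M"
| "capt_free T B (Out a) = True"
| "capt_free T B (Res a P) = capt_free T (insert a B) P"
| "capt_free T B (Par P Q) = (capt_free T B P \<and> capt_free T B Q)"
| "capt_free T B (Var n) = (n = 1 \<longrightarrow> B \<inter> fn T = {})"
| "capt_free_s T B SNil = True"
| "capt_free_s T B (STau P) = capt_free T B P"
| "capt_free_s T B (SIn a P) = capt_free T B P"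
| "capt_free_s T B (SChoice M N) = (capt_free_s T B M \<and> capt_free_s T B N)"

primrec subst_ctx :: "proc \<Rightarrow> ctx \<Rightarrow> ctx" where
  "subst_ctx T Hole = Hole"
| "subst_ctx T (HolePar R) = HolePar (subst T R)"

primrec capt_free_ctx :: "proc \<Rightarrow> ctx \<Rightarrow> bool" where
  "capt_free_ctx T Hole = True"
| "capt_free_ctx T (HolePar R) = capt_free T {} R"

definition ltsAI :: "proc \<Rightarrow> ctx \<Rightarrow> proc \<Rightarrow> bool" where
  "ltsAI P C Q \<longleftrightarrow> (\<exists>Ce Qe T. ltsA P Ce Qe \<and> pure T \<and>
      capt_free T {} Qe \<and> capt_free_ctx T Ce \<and>
      subst T Qe \<equiv>\<^sub>s Q \<and> subst_ctx T Ce = C)"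

definition L_bisimulation :: "ctx set \<Rightarrow> (proc \<Rightarrow> proc \<Rightarrow> bool) \<Rightarrow> bool" where
  "L_bisimulation L R \<longleftrightarrow>
     (\<forall>P Q. R P Q \<longrightarrow> R Q P) \<and>
     (\<forall>P Q C P'. R P Q \<longrightarrow> ltsAI P C P' \<longrightarrow>
        (if C \<in> L then (\<exists>Q'. ltsAI Q C Q' \<and> R P' Q')
         else (\<exists>Q'. red (fill C Q) Q' \<and> R P' Q')))"

definition L_bisim :: "ctx set \<Rightarrow> proc \<Rightarrow> proc \<Rightarrow> bool" where
  "L_bisim L P Q \<longleftrightarrow> (\<exists>R. L_bisimulation L R \<and> R P Q)"

definition L_A :: "ctx set" where
  "L_A = {Hole} \<union> {HolePar (Sum (SIn a T)) | a T. pure T}"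

end

theory Submission
  imports Defs
begin

lemma scong_pure:
  "P \<equiv>\<^sub>s Q \<Longrightarrow> pure P = pure Q"
  "M \<equiv>\<^sub>m N \<Longrightarrow> pure_s M = pure_s N"
proof -
  have sw: "pure (pswap a b P) = pure P" "pure_s (sswap a b M) = pure_s M" for a b P M
    by (induct P and M) auto
  show "P \<equiv>\<^sub>s Q \<Longrightarrow> pure P = pure Q" "M \<equiv>\<^sub>m N \<Longrightarrow> pure_s M = pure_s N"
    by (induct rule: scong_scong_s.inducts) (auto simp: sw)
qed

lemma red_pure: "red P Q \<Longrightarrow> pure P \<Longrightarrow> pure Q"
  by (induct rule: red.induct) (auto simp: scong_pure)

lemma trans_pure: "trans P \<mu> Q \<Longrightarrow> pure P \<Longrightarrow> pure Q"
  by (induct rule: trans.induct) (auto simp: scong_pure)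

lemma subst_pure: "pure P \<Longrightarrow> subst T P = P" "pure_s M \<Longrightarrow> subst_s T M = M"
  by (induct P and M) auto

lemma capt_free_pure: "pure P \<Longrightarrow> capt_free T B P" "pure_s M \<Longrightarrow> capt_free_s T B M"
  by (induct P and M arbitrary: B and B) auto

lemma capt_free_Zero: "capt_free Zero B P" "capt_free_s Zero B M"
  by (induct P and M arbitrary: B and B) auto

lemma finite_fn: "finite (fn P)" "finite (fn_s M)"
  by (induct P and M) auto

lemma swapn_inv[simp]: "swapn a b (swapn a b c) = c"
  by (auto simp: swapn_def)

lemma pswap_inv[simp]: "pswap a b (pswap a b P) = P" "sswap a b (sswap a b M) = M"
  by (induct P and M) auto

lemma swapn_id[simp]: "swapn a a c = c" by (auto simp: swapn_def)

lemma pswap_id[simp]: "pswap a a P = P" "sswap a a M = M"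
  by (induct P and M) auto

lemma swapn_inj[simp]: "(swapn a b x = swapn a b y) = (x = y)"
  by (metis swapn_inv)

lemma fn_pswap: "fn (pswap a b P) = swapn a b ` fn P" "fn_s (sswap a b M) = swapn a b ` fn_s M"
proof (induct P and M)
  case (Res c P)
  then show ?case by (auto simp: image_set_diff[OF inj_onI] )
qed (auto simp: image_Un)

lemma scong_eqvt:
  "P \<equiv>\<^sub>s Q \<Longrightarrow> pswap a b P \<equiv>\<^sub>s pswap a b Q"
  "M \<equiv>\<^sub>m N \<Longrightarrow> sswap a b M \<equiv>\<^sub>m sswap a b N"
proof (induct rule: scong_scong_s.inducts)
  case (res_extr c P Q)
  then show ?case by (auto intro!: scong_scong_s.res_extr simp: fn_pswap)
next
  case (alpha d c P)
  have "swapn a b d \<notin> fn (Res (swapn a b c) (pswap a b P))"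
    using alpha by (auto simp: fn_pswap)
  then have "Res (swapn a b c) (pswap a b P) \<equiv>\<^sub>s Res (swapn a b d) (pswap (swapn a b c) (swapn a b d) (pswap a b P))"
    by (rule scong_scong_s.alpha)
  moreover have "pswap (swapn a b c) (swapn a b d) (pswap a b P) = pswap a b (pswap c d P)"
    "sswap (swapn a b c) (swapn a b d) (sswap a b M) = sswap a b (sswap c d M)" for P M
    by (induct P and M) (auto simp: swapn_def)
  ultimately show ?case by simp
qed (auto intro: scong_scong_s.intros)


inductive strans :: "summ \<Rightarrow> act \<Rightarrow> proc \<Rightarrow> bool" where
  s_in: "strans (SIn a P) (AIn a) P"
| s_tau: "strans (STau P) ATau P"
| s_l: "strans M \<mu> P \<Longrightarrow> strans (SChoice M N) \<mu> P"
| s_r: "strans N \<mu> P \<Longrightarrow> strans (SChoice M N) \<mu> P"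

inductive syn :: "proc \<Rightarrow> act \<Rightarrow> proc \<Rightarrow> bool" where
  sy_sum: "strans M \<mu> P \<Longrightarrow> syn (Sum M) \<mu> P"
| sy_out: "syn (Out a) (AOut a) Zero"
| sy_res: "syn P \<mu> Q \<Longrightarrow> a \<notin> act_names \<mu> \<Longrightarrow> syn (Res a P) \<mu> (Res a Q)"
| sy_parl: "syn P \<mu> Q \<Longrightarrow> syn (Par P R) \<mu> (Par Q R)"
| sy_parr: "syn R \<mu> S \<Longrightarrow> syn (Par P R) \<mu> (Par P S)"
| sy_comml: "syn P (AIn a) P1 \<Longrightarrow> syn Q (AOut a) Q1 \<Longrightarrow> syn (Par P Q) ATau (Par P1 Q1)"
| sy_commr: "syn P (AOut a) P1 \<Longrightarrow> syn Q (AIn a) Q1 \<Longrightarrow> syn (Par P Q) ATau (Par P1 Q1)"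

inductive_cases synE_Sum[elim!]: "syn (Sum M) \<mu> P"
inductive_cases synE_Out[elim!]: "syn (Out a) \<mu> P"
inductive_cases synE_Res[elim!]: "syn (Res a P) \<mu> Q"
inductive_cases synE_Par[elim!]: "syn (Par P Q) \<mu> R"
inductive_cases synE_Var[elim!]: "syn (Var n) \<mu> R"
inductive_cases stransE_Nil[elim!]: "strans SNil \<mu> P"
inductive_cases stransE_Tau[elim!]: "strans (STau P) \<mu> Q"
inductive_cases stransE_In[elim!]: "strans (SIn a P) \<mu> Q"
inductive_cases stransE_Ch[elim!]: "strans (SChoice M N) \<mu> Q"

lemma syn_fn: "syn P \<mu> Q \<Longrightarrow> fn Q \<subseteq> fn P \<and> act_names \<mu> \<subseteq> fn P"
proof -
  have "strans M \<mu> Q \<Longrightarrow> fn Q \<subseteq> fn_s M \<and> act_names \<mu> \<subseteq> fn_s M" for M \<mu> Q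
    by (induct rule: strans.induct) auto
  note H = this
  show "syn P \<mu> Q \<Longrightarrow> fn Q \<subseteq> fn P \<and> act_names \<mu> \<subseteq> fn P"
    by (induct rule: syn.induct) (auto dest: H)
qed

primrec aswap :: "name \<Rightarrow> name \<Rightarrow> act \<Rightarrow> act" where
  "aswap a b ATau = ATau"
| "aswap a b (AIn c) = AIn (swapn a b c)"
| "aswap a b (AOut c) = AOut (swapn a b c)"

lemma aswap_id: "a \<notin> act_names \<mu> \<Longrightarrow> b \<notin> act_names \<mu> \<Longrightarrow> aswap a b \<mu> = \<mu>"
  by (cases \<mu>) (auto simp: swapn_def)

lemma syn_eqvt: "syn P \<mu> Q \<Longrightarrow> syn (pswap a b P) (aswap a b \<mu>) (pswap a b Q)"
proof -
  have "strans M \<mu> Q \<Longrightarrow> strans (sswap a b M) (aswap a b \<mu>) (pswap a b Q)" for M \<mu> Q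
    by (induct rule: strans.induct) (auto intro: strans.intros)
  note H = this
  show "syn P \<mu> Q \<Longrightarrow> syn (pswap a b P) (aswap a b \<mu>) (pswap a b Q)"
    apply (induct rule: syn.induct)
    apply (auto intro: syn.intros H)
    apply (rule sy_res, assumption)
     apply (case_tac \<mu>; auto)
    done
qed


lemmas sc = scong_scong_s.intros

definition sim where "sim P Q \<longleftrightarrow> (\<forall>\<mu> P'. syn P \<mu> P' \<longrightarrow> (\<exists>Q'. syn Q \<mu> Q' \<and> P' \<equiv>\<^sub>s Q'))"

lemma sim2: "(\<forall>\<mu> Q'. syn Q \<mu> Q' \<longrightarrow> (\<exists>P'. syn P \<mu> P' \<and> P' \<equiv>\<^sub>s Q')) = sim Q P"
  unfolding sim_def by (meson sc(2))

lemma par_sim: assumes "sim P Q" "sim R S" "P \<equiv>\<^sub>s Q" "R \<equiv>\<^sub>s S" shows "sim (Par P R) (Par Q S)"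
  unfolding sim_def
proof (intro allI impI)
  fix \<mu> X assume "syn (Par P R) \<mu> X"
  then show "\<exists>Y. syn (Par Q S) \<mu> Y \<and> X \<equiv>\<^sub>s Y"
  proof cases
    case (sy_parl P') then show ?thesis using assms unfolding sim_def by (meson sc(9) sc(1) syn.intros)
  next
    case (sy_parr R') then show ?thesis using assms unfolding sim_def by (meson sc(9) sc(1) syn.intros)
  next
    case (sy_comml a P1 R1) then show ?thesis using assms unfolding sim_def by (meson sc(9) syn.intros)
  next
    case (sy_commr a P1 R1) then show ?thesis using assms unfolding sim_def by (meson sc(9) syn.intros)
  qed
qed

lemma assoc1: "syn (Par (Par P Q) R) \<mu> X \<Longrightarrow> \<exists>Y. syn (Par P (Par Q R)) \<mu> Y \<and> X \<equiv>\<^sub>s Y"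
  by (elim synE_Par) (blast intro: syn.intros sc(14))+

lemma assoc2: "syn (Par P (Par Q R)) \<mu> X \<Longrightarrow> \<exists>Y. syn (Par (Par P Q) R) \<mu> Y \<and> Y \<equiv>\<^sub>s X"
  by (elim synE_Par) (blast intro: syn.intros sc(14))+

lemma extr1: "a \<notin> fn P \<Longrightarrow> syn (Res a (Par P Q)) \<mu> X \<Longrightarrow> \<exists>Y. syn (Par P (Res a Q)) \<mu> Y \<and> X \<equiv>\<^sub>s Y"
  apply (elim synE_Res synE_Par)
     apply (frule syn_fn; fastforce intro: syn.intros sc(20))+
  done

lemma extr2: "a \<notin> fn P \<Longrightarrow> syn (Par P (Res a Q)) \<mu> X \<Longrightarrow> \<exists>Y. syn (Res a (Par P Q)) \<mu> Y \<and> Y \<equiv>\<^sub>s X"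
  apply (elim synE_Res synE_Par)
     apply (frule syn_fn; fastforce intro: syn.intros sc(20))+
  done

lemma scong_bisim:
 "P \<equiv>\<^sub>s Q \<Longrightarrow> (\<forall>\<mu> P'. syn P \<mu> P' \<longrightarrow> (\<exists>Q'. syn Q \<mu> Q' \<and> P' \<equiv>\<^sub>s Q')) \<and> (\<forall>\<mu> Q'. syn Q \<mu> Q' \<longrightarrow> (\<exists>P'. syn P \<mu> P' \<and> P' \<equiv>\<^sub>s Q'))"
 "M \<equiv>\<^sub>m N \<Longrightarrow> (\<forall>\<mu> P'. strans M \<mu> P' \<longrightarrow> (\<exists>Q'. strans N \<mu> Q' \<and> P' \<equiv>\<^sub>s Q')) \<and> (\<forall>\<mu> Q'. strans N \<mu> Q' \<longrightarrow> (\<exists>P'. strans M \<mu> P' \<and> P' \<equiv>\<^sub>s Q'))"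
proof (induct rule: scong_scong_s.inducts)
  case (refl P) then show ?case by (auto intro: sc)
next
  case (sym P Q) then show ?case by (meson sc)
next
  case (trans P Q R) then show ?case by (meson sc)
next
  case (refl_s M) then show ?case by (auto intro: sc)
next
  case (sym_s M N) then show ?case by (meson sc)
next
  case (trans_s M N K) then show ?case by (meson sc)
next
  case (cong_Sum M N) then show ?case by (meson sy_sum synE_Sum)
next
  case (cong_Res P Q a) then show ?case by (fastforce intro: syn.intros sc)
next
  case (cong_Par P P' Q Q') then show ?case
    using par_sim[of P P' Q Q'] par_sim[of P' P Q' Q] sc(2) unfolding sim2 by (auto simp: sim_def)
next
  case (cong_Tau P Q) then show ?case by (auto intro: strans.intros)
next
  case (cong_In P Q a) then show ?case by (auto intro: strans.intros)
next
  case (cong_Choice M M' N N') then show ?case by (fastforce intro: strans.intros)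
next
  case (par_comm P Q) then show ?case by (fastforce intro: syn.intros sc)
next
  case (par_assoc P Q R) show ?case using assoc1[of P Q R] assoc2[of P Q R] by metis
next
  case (par_unit P) then show ?case by (fastforce intro: syn.intros sc)
next
  case (choice_comm M N) then show ?case by (fastforce intro: strans.intros sc)
next
  case (choice_assoc M N K) then show ?case by (fastforce intro: strans.intros sc)
next
  case (choice_unit M) then show ?case by (fastforce intro: strans.intros sc)
next
  case (res_swap a b P) then show ?case by (fastforce intro: syn.intros sc)
next
  case (res_extr a P Q) then show ?case using extr1[of a P Q] extr2[of a P Q] by metis
next
  case (alpha b a P)
  have hb: "b \<notin> fn P - {a}" using alpha by simp
  show ?case
  proof (intro conjI allI impI)
    fix \<mu> P' assume "syn (Res a P) \<mu> P'"
    then obtain Y where P': "P' = Res a Y" "syn P \<mu> Y" "a \<notin> act_names \<mu>" by auto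
    have f: "fn Y \<subseteq> fn P" "act_names \<mu> \<subseteq> fn P" using syn_fn[OF P'(2)] by auto
    have bm: "b \<notin> act_names \<mu>" using f hb P'(3) by auto
    then have "syn (pswap a b P) \<mu> (pswap a b Y)" using syn_eqvt[OF P'(2), of a b] aswap_id P'(3) by metis
    then have "syn (Res b (pswap a b P)) \<mu> (Res b (pswap a b Y))" using bm by (rule sy_res)
    moreover have "Res a Y \<equiv>\<^sub>s Res b (pswap a b Y)" by (rule sc(21)) (use f hb in auto)
    ultimately show "\<exists>Q'. syn (Res b (pswap a b P)) \<mu> Q' \<and> P' \<equiv>\<^sub>s Q'" using P'(1) by (intro exI[of _ "Res b (pswap a b Y)"]) simp
  next
    fix \<mu> Q' assume "syn (Res b (pswap a b P)) \<mu> Q'"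
    then obtain Y where Q': "Q' = Res b Y" "syn (pswap a b P) \<mu> Y" "b \<notin> act_names \<mu>" by auto
    show "\<exists>P'. syn (Res a P) \<mu> P' \<and> P' \<equiv>\<^sub>s Q'"
    proof (cases "a = b")
      case True then show ?thesis using Q' by (metis sy_res sc(1) pswap_id(1))
    next
      case False
      have f: "fn Y \<subseteq> swapn a b ` fn P" "act_names \<mu> \<subseteq> swapn a b ` fn P"
        using syn_fn[OF Q'(2)] by (auto simp: fn_pswap)
      have am: "a \<notin> act_names \<mu>"
      proof
        assume "a \<in> act_names \<mu>"
        then obtain c where "c \<in> fn P" "a = swapn a b c" using f by auto
        then have "b \<in> fn P" by (auto simp: swapn_def split: if_splits)
        then show False using hb False by auto
      qed
      have "syn P \<mu> (pswap a b Y)" using syn_eqvt[OF Q'(2), of a b] aswap_id[OF am Q'(3)] by simp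
      then have "syn (Res a P) \<mu> (Res a (pswap a b Y))" using am by (rule sy_res)
      moreover have "b \<notin> fn (Res a (pswap a b Y))"
      proof
        assume "b \<in> fn (Res a (pswap a b Y))"
        then obtain c where "c \<in> fn Y" "b = swapn a b c" by (auto simp: fn_pswap)
        then have "a \<in> fn Y" by (auto simp: swapn_def split: if_splits)
        then obtain d where "d \<in> fn P" "a = swapn a b d" using f by auto
        then have "b \<in> fn P" by (auto simp: swapn_def split: if_splits)
        then show False using hb False by auto
      qed
      then have "Res a (pswap a b Y) \<equiv>\<^sub>s Res b (pswap a b (pswap a b Y))" by (rule sc(21))
      ultimately show ?thesis using Q' by (intro exI[of _ "Res a (pswap a b Y)"]) simp
    qed
  qed
qed


declare sc(3)[trans] sc(6)[trans]

lemma strans_shape: "strans M \<mu> P \<Longrightarrow>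
   (\<exists>a M'. \<mu> = AIn a \<and> M \<equiv>\<^sub>m SChoice (SIn a P) M') \<or> (\<exists>M'. \<mu> = ATau \<and> M \<equiv>\<^sub>m SChoice (STau P) M')"
proof (induct rule: strans.induct)
  case (s_in a P) then show ?case using sc(5)[OF sc(18)] by blast
next
  case (s_tau P) then show ?case using sc(5)[OF sc(18)] by blast
next
  case (s_l M \<mu> P N)
  have "SChoice M N \<equiv>\<^sub>m SChoice (SChoice X M') N \<Longrightarrow> SChoice M N \<equiv>\<^sub>m SChoice X (SChoice M' N)" for X M'
    using sc(17) sc(6) by blast
  then show ?case using s_l sc(12)[OF _ sc(4)] by metis
next
  case (s_r N \<mu> P M)
  have "SChoice M N \<equiv>\<^sub>m SChoice (SChoice X M') M \<Longrightarrow> SChoice M N \<equiv>\<^sub>m SChoice X (SChoice M' M)" for X M'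
    using sc(17) sc(6) by blast
  moreover have "N \<equiv>\<^sub>m K \<Longrightarrow> SChoice M N \<equiv>\<^sub>m SChoice K M" for K
    using sc(12)[OF sc(4)] sc(16) sc(6) by blast
  ultimately show ?case using s_r by metis
qed

lemma syn_trans: "syn P \<mu> Q \<Longrightarrow> trans P \<mu> Q"
proof (induct rule: syn.induct)
  case (sy_sum M \<mu> P)
  from strans_shape[OF this] show ?case
    by (metis sc(1) sc(7) t_in t_struct t_tau)
next
  case (sy_out a) then show ?case by (rule t_out)
next
  case (sy_res P \<mu> Q a) then show ?case using t_res by blast
next
  case (sy_parl P \<mu> Q R) then show ?case using t_par by blast
next
  case (sy_parr R \<mu> S P) then show ?case by (meson sc(13) t_par t_struct)
next
  case (sy_comml P a P1 Q Q1) then show ?case using t_comm by blast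
next
  case (sy_commr P a P1 Q Q1) then show ?case by (meson sc(13) t_comm t_struct)
qed

lemma trans_syn: "trans P \<mu> Q \<Longrightarrow> \<exists>Q'. syn P \<mu> Q' \<and> Q' \<equiv>\<^sub>s Q"
proof (induct rule: trans.induct)
  case (t_in a P M) then show ?case by (meson s_in s_l sc(1) sy_sum)
next
  case (t_tau P M) then show ?case by (meson s_tau s_l sc(1) sy_sum)
next
  case (t_out a) then show ?case by (meson sy_out sc(1))
next
  case (t_res P \<mu> Q a) then show ?case by (meson sy_res sc(8))
next
  case (t_par P \<mu> Q R) then show ?case by (meson sy_parl sc(9) sc(1))
next
  case (t_comm P a P1 Q Q1) then show ?case by (meson sy_comml sc(9))
next
  case (t_struct P P' \<mu> Q' Q)
  then obtain X where "syn P' \<mu> X" "X \<equiv>\<^sub>s Q'" by blast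
  moreover from scong_bisim(1)[OF t_struct(1)] this(1) obtain Y where "syn P \<mu> Y" "Y \<equiv>\<^sub>s X" by blast
  ultimately show ?case using t_struct(4) by (meson sc(3))
qed

lemma trans_iff: "trans P \<mu> Q \<longleftrightarrow> (\<exists>Q'. syn P \<mu> Q' \<and> Q' \<equiv>\<^sub>s Q)"
  using trans_syn syn_trans t_struct sc(1) by meson

lemma syn_out_inv: "syn Q \<mu> Q1 \<Longrightarrow> \<mu> = AOut a \<Longrightarrow> Q \<equiv>\<^sub>s Par (Out a) Q1"
proof (induct arbitrary: a rule: syn.induct)
  case (sy_sum M \<mu> P) then show ?case using strans_shape by blast
next
  case (sy_out b) then show ?case using sc(2)[OF sc(15)] sc(13) sc(3) by blast
next
  case (sy_res P \<mu> Q b)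
  then have "Res b P \<equiv>\<^sub>s Res b (Par (Out a) Q)" by (simp add: sc(8))
  also have "\<dots> \<equiv>\<^sub>s Par (Out a) (Res b Q)" using sy_res by (intro sc(20)) auto
  finally show ?case .
next
  case (sy_parl P \<mu> Q R)
  then have "Par P R \<equiv>\<^sub>s Par (Par (Out a) Q) R" by (simp add: sc(9) sc(1))
  also have "\<dots> \<equiv>\<^sub>s Par (Out a) (Par Q R)" by (rule sc(14))
  finally show ?case .
next
  case (sy_parr R \<mu> S P)
  then have "Par P R \<equiv>\<^sub>s Par P (Par (Out a) S)" by (simp add: sc(9) sc(1))
  also have "\<dots> \<equiv>\<^sub>s Par (Par P (Out a)) S" by (rule sc(2)[OF sc(14)])
  also have "\<dots> \<equiv>\<^sub>s Par (Par (Out a) P) S" by (rule sc(9)[OF sc(13) sc(1)])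
  also have "\<dots> \<equiv>\<^sub>s Par (Out a) (Par P S)" by (rule sc(14))
  finally show ?case .
qed auto

lemma syn_in_red: "syn P \<mu> P1 \<Longrightarrow> \<mu> = AIn a \<Longrightarrow> red (Par P (Out a)) P1"
proof (induct arbitrary: a rule: syn.induct)
  case (sy_sum M \<mu> P)
  then obtain M' where "M \<equiv>\<^sub>m SChoice (SIn a P) M'" using strans_shape by blast
  then have "Par (Sum M) (Out a) \<equiv>\<^sub>s Par (Sum (SChoice (SIn a P) M')) (Out a)"
    by (simp add: sc(1) sc(7) sc(9))
  then show ?case by (meson red.comm red.struct sc(1))
next
  case (sy_res P \<mu> Q b)
  have "Par (Res b P) (Out a) \<equiv>\<^sub>s Par (Out a) (Res b P)" by (rule sc(13))
  also have "\<dots> \<equiv>\<^sub>s Res b (Par (Out a) P)" using sy_res by (intro sc(2)[OF sc(20)]) auto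
  also have "\<dots> \<equiv>\<^sub>s Res b (Par P (Out a))" by (rule sc(8)[OF sc(13)])
  finally have "Par (Res b P) (Out a) \<equiv>\<^sub>s Res b (Par P (Out a))" .
  moreover have "red (Par P (Out a)) Q" using sy_res by simp
  ultimately show ?case using sy_res by (meson red.res red.struct sc(1))
next
  case (sy_parl P \<mu> Q R)
  have "Par (Par P R) (Out a) \<equiv>\<^sub>s Par P (Par R (Out a))" by (rule sc(14))
  also have "\<dots> \<equiv>\<^sub>s Par P (Par (Out a) R)" by (rule sc(9)[OF sc(1) sc(13)])
  also have "\<dots> \<equiv>\<^sub>s Par (Par P (Out a)) R" by (rule sc(2)[OF sc(14)])
  finally have "Par (Par P R) (Out a) \<equiv>\<^sub>s Par (Par P (Out a)) R" .
  moreover have "red (Par P (Out a)) Q" using sy_parl by simp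
  ultimately show ?case by (meson red.par red.struct sc(1))
next
  case (sy_parr R \<mu> S P)
  have "Par (Par P R) (Out a) \<equiv>\<^sub>s Par (Par R P) (Out a)" by (rule sc(9)[OF sc(13) sc(1)])
  also have "\<dots> \<equiv>\<^sub>s Par R (Par P (Out a))" by (rule sc(14))
  also have "\<dots> \<equiv>\<^sub>s Par R (Par (Out a) P)" by (rule sc(9)[OF sc(1) sc(13)])
  also have "\<dots> \<equiv>\<^sub>s Par (Par R (Out a)) P" by (rule sc(2)[OF sc(14)])
  finally have "Par (Par P R) (Out a) \<equiv>\<^sub>s Par (Par R (Out a)) P" .
  moreover have "red (Par R (Out a)) S" using sy_parr by simp
  ultimately show ?case by (meson red.par red.struct sc(13))
qed auto

lemma syn_tau_red: "syn P \<mu> Q \<Longrightarrow> \<mu> = ATau \<Longrightarrow> red P Q"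
proof (induct rule: syn.induct)
  case (sy_sum M \<mu> P)
  then obtain M' where "M \<equiv>\<^sub>m SChoice (STau P) M'" using strans_shape by blast
  then show ?case by (meson red.tau red.struct sc(1) sc(7))
next
  case (sy_res P \<mu> Q a) then show ?case by (simp add: red.res)
next
  case (sy_parl P \<mu> Q R) then show ?case by (simp add: red.par)
next
  case (sy_parr R \<mu> S P) then show ?case by (meson red.par red.struct sc(13))
next
  case (sy_comml P a P1 Q Q1)
  have "Par P Q \<equiv>\<^sub>s Par P (Par (Out a) Q1)" using syn_out_inv[OF sy_comml(3)] by (simp add: sc(1) sc(9))
  also have "\<dots> \<equiv>\<^sub>s Par (Par P (Out a)) Q1" by (rule sc(2)[OF sc(14)])
  finally have "Par P Q \<equiv>\<^sub>s Par (Par P (Out a)) Q1" .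
  moreover have "red (Par P (Out a)) P1" using syn_in_red[OF sy_comml(1)] by simp
  ultimately show ?case by (meson red.par red.struct sc(1))
next
  case (sy_commr P a P1 Q Q1)
  have "Par P Q \<equiv>\<^sub>s Par (Par (Out a) P1) Q" using syn_out_inv[OF sy_commr(1)] by (simp add: sc(1) sc(9))
  also have "\<dots> \<equiv>\<^sub>s Par Q (Par (Out a) P1)" by (rule sc(13))
  also have "\<dots> \<equiv>\<^sub>s Par (Par Q (Out a)) P1" by (rule sc(2)[OF sc(14)])
  finally have "Par P Q \<equiv>\<^sub>s Par (Par Q (Out a)) P1" .
  moreover have "red (Par Q (Out a)) Q1" using syn_in_red[OF sy_commr(3)] by simp
  ultimately show ?case by (meson red.par red.struct sc(13))
qed auto

lemma red_trans: "red P Q \<Longrightarrow> trans P ATau Q"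
proof (induct rule: red.induct)
  case (comm a P M) then show ?case by (meson sc(1) sc(15) t_comm t_in t_out t_struct)
next
  case (tau P M) then show ?case by (rule t_tau)
next
  case (res P Q a) then show ?case by (simp add: t_res)
next
  case (par P Q R) then show ?case using t_par by blast
next
  case (struct P P' Q' Q) then show ?case using t_struct by blast
qed

lemma red_iff_trans: "red P Q \<longleftrightarrow> trans P ATau Q"
  by (meson red.struct red_trans sc(1) syn_tau_red trans_syn)


lemma ress_simps[simp]: "ress [] P = P" "ress (a#A) P = Res a (ress A P)"
  by (simp_all add: ress_def)

lemma ress_cong: "P \<equiv>\<^sub>s Q \<Longrightarrow> ress A P \<equiv>\<^sub>s ress A Q"
  by (induct A) (auto intro: sc(8))

lemma ress_red: "red P Q \<Longrightarrow> red (ress A P) (ress A Q)"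
  by (induct A) (auto intro: red.res)

lemma ress_syn: "syn P \<mu> Q \<Longrightarrow> set A \<inter> act_names \<mu> = {} \<Longrightarrow> syn (ress A P) \<mu> (ress A Q)"
  by (induct A) (auto intro: sy_res)

lemma fn_ress[simp]: "fn (ress A P) = fn P - set A"
  by (induct A) auto

lemma pure_ress[simp]: "pure (ress A P) = pure P"
  by (induct A) auto

lemma subst_ress[simp]: "subst T (ress A P) = ress A (subst T P)"
  by (induct A) auto

lemma capt_free_ress[simp]: "capt_free T B (ress A P) = capt_free T (B \<union> set A) P"
  by (induct A arbitrary: B) auto

lemma pswap_ress: "a \<notin> set A \<Longrightarrow> b \<notin> set A \<Longrightarrow> pswap a b (ress A P) = ress A (pswap a b P)"
  by (induct A) (auto simp: swapn_def)

lemma ress_extr: "set A \<inter> fn T = {} \<Longrightarrow> ress A (Par X T) \<equiv>\<^sub>s Par (ress A X) T"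
proof (induct A)
  case Nil then show ?case by (simp add: sc(1))
next
  case (Cons b A)
  then have "Res b (ress A (Par X T)) \<equiv>\<^sub>s Res b (Par (ress A X) T)" by (simp add: sc(8))
  also have "\<dots> \<equiv>\<^sub>s Res b (Par T (ress A X))" by (rule sc(8)[OF sc(13)])
  also have "\<dots> \<equiv>\<^sub>s Par T (Res b (ress A X))" using Cons by (intro sc(20)) auto
  also have "\<dots> \<equiv>\<^sub>s Par (Res b (ress A X)) T" by (rule sc(13))
  finally show ?case by simp
qed

lemma fresh_name: "finite (S::name set) \<Longrightarrow> \<exists>c. c \<notin> S"
  by (metis ex_new_if_finite infinite_UNIV_nat)

lemma par_nf:
  assumes "R \<equiv>\<^sub>s ress A (Par S R0)" "set A \<inter> fn Q = {}"
  shows "Par R Q \<equiv>\<^sub>s ress A (Par S (Par R0 Q))"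
proof -
  have "Par R Q \<equiv>\<^sub>s Par (ress A (Par S R0)) Q" using assms by (simp add: sc(9) sc(1))
  also have "\<dots> \<equiv>\<^sub>s ress A (Par (Par S R0) Q)" using ress_extr[OF assms(2)] by (rule sc(2))
  also have "\<dots> \<equiv>\<^sub>s ress A (Par S (Par R0 Q))" by (rule ress_cong[OF sc(14)])
  finally show ?thesis .
qed

lemma nf_in:
  "syn P \<mu> P1 \<Longrightarrow> \<mu> = AIn a \<Longrightarrow> finite F \<Longrightarrow>
   \<exists>A M R0 P0. P \<equiv>\<^sub>s ress A (Par (Sum (SChoice (SIn a P0) M)) R0) \<and> P1 \<equiv>\<^sub>s ress A (Par P0 R0)
      \<and> a \<notin> set A \<and> set A \<inter> F = {}"
proof (induct arbitrary: a F rule: syn.induct)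
  case (sy_sum M \<mu> P)
  then obtain M' where "M \<equiv>\<^sub>m SChoice (SIn a P) M'" using strans_shape by blast
  then have "Sum M \<equiv>\<^sub>s ress [] (Par (Sum (SChoice (SIn a P) M')) Zero)"
    using sc(2)[OF sc(15)] sc(7) sc(3) by fastforce
  moreover have "P \<equiv>\<^sub>s ress [] (Par P Zero)" using sc(2)[OF sc(15)] by simp
  ultimately show ?case by fastforce
next
  case (sy_res P \<mu> Q b)
  have ab: "a \<noteq> b" using sy_res by auto
  obtain c where c: "c \<notin> F \<union> fn P \<union> fn Q \<union> {a, b}"
    using fresh_name[of "F \<union> fn P \<union> fn Q \<union> {a, b}"] sy_res finite_fn by auto
  from sy_res(2)[of a "F \<union> {b, c}"] sy_res(4,5) obtain A M R0 P0 where
    nf: "P \<equiv>\<^sub>s ress A (Par (Sum (SChoice (SIn a P0) M)) R0)" "Q \<equiv>\<^sub>s ress A (Par P0 R0)"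
      "a \<notin> set A" "set A \<inter> (F \<union> {b, c}) = {}" by auto
  have sa: "swapn b c a = a" using ab c by (auto simp: swapn_def)
  have "Res b P \<equiv>\<^sub>s Res c (pswap b c P)" using c by (intro sc(21)) auto
  also have "\<dots> \<equiv>\<^sub>s Res c (pswap b c (ress A (Par (Sum (SChoice (SIn a P0) M)) R0)))"
    by (rule sc(8)[OF scong_eqvt(1)[OF nf(1)]])
  also have "\<dots> = ress (c # A) (Par (Sum (SChoice (SIn a (pswap b c P0)) (sswap b c M))) (pswap b c R0))"
    using nf(4) sa by (simp add: pswap_ress)
  finally have 1: "Res b P \<equiv>\<^sub>s \<dots>" .
  have "Res b Q \<equiv>\<^sub>s Res c (pswap b c Q)" using c by (intro sc(21)) auto
  also have "\<dots> \<equiv>\<^sub>s Res c (pswap b c (ress A (Par P0 R0)))"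
    by (rule sc(8)[OF scong_eqvt(1)[OF nf(2)]])
  also have "\<dots> = ress (c # A) (Par (pswap b c P0) (pswap b c R0))"
    using nf(4) sa by (simp add: pswap_ress)
  finally have 2: "Res b Q \<equiv>\<^sub>s \<dots>" .
  have "a \<notin> set (c # A)" "set (c # A) \<inter> F = {}" using nf c by auto
  with 1 2 show ?case by blast
next
  case (sy_parl P \<mu> Q R)
  from sy_parl(2)[of a "F \<union> fn R"] sy_parl(3,4) finite_fn obtain A M R0 P0 where
    nf: "P \<equiv>\<^sub>s ress A (Par (Sum (SChoice (SIn a P0) M)) R0)" "Q \<equiv>\<^sub>s ress A (Par P0 R0)"
      "a \<notin> set A" "set A \<inter> (F \<union> fn R) = {}" by blast
  have "set A \<inter> fn R = {}" using nf by auto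
  from par_nf[OF nf(1) this] par_nf[OF nf(2) this] nf show ?case by blast
next
  case (sy_parr R \<mu> S P)
  from sy_parr(2)[of a "F \<union> fn P"] sy_parr(3,4) finite_fn obtain A M R0 P0 where
    nf: "R \<equiv>\<^sub>s ress A (Par (Sum (SChoice (SIn a P0) M)) R0)" "S \<equiv>\<^sub>s ress A (Par P0 R0)"
      "a \<notin> set A" "set A \<inter> (F \<union> fn P) = {}" by blast
  have "set A \<inter> fn P = {}" using nf by auto
  from par_nf[OF nf(1) this] par_nf[OF nf(2) this]
  have "Par P R \<equiv>\<^sub>s ress A (Par (Sum (SChoice (SIn a P0) M)) (Par R0 P))"
    "Par P S \<equiv>\<^sub>s ress A (Par P0 (Par R0 P))" using sc(13) sc(3) by blast+
  with nf show ?case by blast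
qed auto


lemma trans_l: "P \<equiv>\<^sub>s P0 \<Longrightarrow> trans P0 \<mu> P' \<Longrightarrow> trans P \<mu> P'"
  using t_struct sc(1) by blast
lemma trans_r: "trans P \<mu> P' \<Longrightarrow> P' \<equiv>\<^sub>s P'' \<Longrightarrow> trans P \<mu> P''"
  using t_struct sc(1) by blast

lemma trans_par_inv: "trans (Par X T) \<mu> W \<Longrightarrow>
   (\<exists>X'. trans X \<mu> X' \<and> W \<equiv>\<^sub>s Par X' T) \<or> (\<exists>T'. trans T \<mu> T' \<and> W \<equiv>\<^sub>s Par X T') \<or>
   (\<mu> = ATau \<and> (\<exists>a X' T'. trans X (AIn a) X' \<and> trans T (AOut a) T' \<and> W \<equiv>\<^sub>s Par X' T')) \<or>
   (\<mu> = ATau \<and> (\<exists>a X' T'. trans X (AOut a) X' \<and> trans T (AIn a) T' \<and> W \<equiv>\<^sub>s Par X' T'))"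
proof -
  assume "trans (Par X T) \<mu> W"
  from trans_syn[OF this] obtain Z where z: "syn (Par X T) \<mu> Z" "Z \<equiv>\<^sub>s W" by metis
  have w: "W \<equiv>\<^sub>s Z" using z(2) by (rule sc(2))
  from z(1) show ?thesis
  proof cases
    case (sy_parl X') then show ?thesis using w syn_trans by blast
  next
    case (sy_parr T') then show ?thesis using w syn_trans by blast
  next
    case (sy_comml a X' T') then show ?thesis using w syn_trans by blast
  next
    case (sy_commr a X' T') then show ?thesis using w syn_trans by blast
  qed
qed

lemma trans_parr: "trans T \<mu> T' \<Longrightarrow> trans (Par X T) \<mu> (Par X T')"
  by (meson sc(9) sc(1) sy_parr syn_trans t_struct trans_syn)

lemma trans_commr: "trans X (AOut a) X' \<Longrightarrow> trans T (AIn a) T' \<Longrightarrow> trans (Par X T) ATau (Par X' T')"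
  by (meson sc(13) t_comm t_struct)

lemma trans_out_inv: "trans T (AOut a) T' \<Longrightarrow> T \<equiv>\<^sub>s Par (Out a) T'"
  by (meson sc(1) sc(3) sc(9) syn_out_inv trans_syn)

lemma async_bisim_sym: "async_bisim P Q \<Longrightarrow> async_bisim Q P"
proof -
  assume "async_bisim P Q"
  then obtain R where R: "async_bisimulation R" "R P Q" unfolding async_bisim_def by blast
  then have "R Q P" unfolding async_bisimulation_def by blast
  with R(1) show ?thesis unfolding async_bisim_def by blast
qed

lemma async_bisim_step: "async_bisim P Q \<Longrightarrow>
        (\<forall>P'. trans P ATau P' \<longrightarrow> (\<exists>Q'. trans Q ATau Q' \<and> async_bisim P' Q')) \<and>
        (\<forall>a P'. trans P (AOut a) P' \<longrightarrow> (\<exists>Q'. trans Q (AOut a) Q' \<and> async_bisim P' Q')) \<and>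
        (\<forall>a P'. trans P (AIn a) P' \<longrightarrow>
            ((\<exists>Q'. trans Q (AIn a) Q' \<and> async_bisim P' Q') \<or>
             (\<exists>Q'. trans Q ATau Q' \<and> async_bisim P' (Par Q' (Out a)))))"
proof -
  assume "async_bisim P Q"
  then obtain R where R: "async_bisimulation R" "R P Q" unfolding async_bisim_def by blast
  have sub: "R x y \<Longrightarrow> async_bisim x y" for x y using R(1) unfolding async_bisim_def by blast
  have H: "(\<forall>P'. trans P ATau P' \<longrightarrow> (\<exists>Q'. trans Q ATau Q' \<and> R P' Q')) \<and>
        (\<forall>a P'. trans P (AOut a) P' \<longrightarrow> (\<exists>Q'. trans Q (AOut a) Q' \<and> R P' Q')) \<and>
        (\<forall>a P'. trans P (AIn a) P' \<longrightarrow>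
            ((\<exists>Q'. trans Q (AIn a) Q' \<and> R P' Q') \<or>
             (\<exists>Q'. trans Q ATau Q' \<and> R P' (Par Q' (Out a)))))"
    using R unfolding async_bisimulation_def by blast
  show ?thesis
  proof (intro conjI allI impI)
    fix P' assume "trans P ATau P'" then show "\<exists>Q'. trans Q ATau Q' \<and> async_bisim P' Q'" using H sub by blast
  next
    fix a P' assume "trans P (AOut a) P'" then show "\<exists>Q'. trans Q (AOut a) Q' \<and> async_bisim P' Q'" using H sub by blast
  next
    fix a P' assume "trans P (AIn a) P'"
    then have "(\<exists>Q'. trans Q (AIn a) Q' \<and> R P' Q') \<or> (\<exists>Q'. trans Q ATau Q' \<and> R P' (Par Q' (Out a)))"
      using H by blast
    then show "(\<exists>Q'. trans Q (AIn a) Q' \<and> async_bisim P' Q') \<or>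
             (\<exists>Q'. trans Q ATau Q' \<and> async_bisim P' (Par Q' (Out a)))" using sub by blast
  qed
qed

definition Rel :: "proc \<Rightarrow> proc \<Rightarrow> bool" where
  "Rel P Q \<longleftrightarrow> (\<exists>X Y T. P \<equiv>\<^sub>s Par X T \<and> Q \<equiv>\<^sub>s Par Y T \<and> async_bisim X Y)"

lemma par_swap3: "Par (Par A B) C \<equiv>\<^sub>s Par (Par A C) B"
proof -
  have "Par (Par A B) C \<equiv>\<^sub>s Par A (Par B C)" by (rule sc(14))
  also have "\<dots> \<equiv>\<^sub>s Par A (Par C B)" by (rule sc(9)[OF sc(1) sc(13)])
  also have "\<dots> \<equiv>\<^sub>s Par (Par A C) B" by (rule sc(2)[OF sc(14)])
  finally show ?thesis .
qed

lemma Rel_step: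
  assumes ab: "async_bisim X Y" and tr: "trans (Par X T) \<mu> W"
  shows "(\<mu> = ATau \<longrightarrow> (\<exists>Q'. trans (Par Y T) ATau Q' \<and> Rel W Q')) \<and>
         (\<forall>a. \<mu> = AOut a \<longrightarrow> (\<exists>Q'. trans (Par Y T) (AOut a) Q' \<and> Rel W Q')) \<and>
         (\<forall>a. \<mu> = AIn a \<longrightarrow> ((\<exists>Q'. trans (Par Y T) (AIn a) Q' \<and> Rel W Q') \<or>
             (\<exists>Q'. trans (Par Y T) ATau Q' \<and> Rel W (Par Q' (Out a)))))"
proof -
  note st = async_bisim_step[OF ab]
  from trans_par_inv[OF tr] show ?thesis
  proof (elim disjE exE conjE)
    fix X' assume x: "trans X \<mu> X'" "W \<equiv>\<^sub>s Par X' T"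
    show ?thesis
    proof (cases \<mu>)
      case ATau
      then obtain Y' where "trans Y ATau Y'" "async_bisim X' Y'" using st x by blast
      then show ?thesis using x ATau by (simp add: Rel_def) (meson sc(1) t_par)
    next
      case (AOut a)
      then obtain Y' where "trans Y (AOut a) Y'" "async_bisim X' Y'" using st x by blast
      then show ?thesis using x AOut by (simp add: Rel_def) (meson sc(1) t_par)
    next
      case (AIn a)
      then have "(\<exists>Y'. trans Y (AIn a) Y' \<and> async_bisim X' Y') \<or>
             (\<exists>Y'. trans Y ATau Y' \<and> async_bisim X' (Par Y' (Out a)))" using st x by blast
      then show ?thesis
      proof (elim disjE exE conjE)
        fix Y' assume "trans Y (AIn a) Y'" "async_bisim X' Y'"
        then show ?thesis using x AIn by (simp add: Rel_def) (meson sc(1) t_par)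
      next
        fix Y' assume y: "trans Y ATau Y'" "async_bisim X' (Par Y' (Out a))"
        have "Rel W (Par (Par Y' T) (Out a))" unfolding Rel_def using x(2) y(2) par_swap3 by blast
        then show ?thesis using AIn y(1) t_par by auto
      qed
    qed
  next
    fix T' assume t: "trans T \<mu> T'" "W \<equiv>\<^sub>s Par X T'"
    have "Rel W (Par Y T')" unfolding Rel_def using t ab sc(1) by blast
    then show ?thesis using trans_parr[OF t(1)] by (cases \<mu>) auto
  next
    fix a X' T' assume m: "\<mu> = ATau" and x: "trans X (AIn a) X'" "trans T (AOut a) T'" "W \<equiv>\<^sub>s Par X' T'"
    have "(\<exists>Y'. trans Y (AIn a) Y' \<and> async_bisim X' Y') \<or>
             (\<exists>Y'. trans Y ATau Y' \<and> async_bisim X' (Par Y' (Out a)))" using st x by blast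
    then show ?thesis
    proof (elim disjE exE conjE)
      fix Y' assume "trans Y (AIn a) Y'" "async_bisim X' Y'"
      then show ?thesis using x m by (simp add: Rel_def) (meson sc(1) t_comm)
    next
      fix Y' assume y: "trans Y ATau Y'" "async_bisim X' (Par Y' (Out a))"
      have "Par Y' T \<equiv>\<^sub>s Par Y' (Par (Out a) T')" using trans_out_inv[OF x(2)] by (simp add: sc(1) sc(9))
      also have "\<dots> \<equiv>\<^sub>s Par (Par Y' (Out a)) T'" by (rule sc(2)[OF sc(14)])
      finally have "Rel W (Par Y' T)" unfolding Rel_def using x(3) y(2) by blast
      then show ?thesis using m y(1) t_par by blast
    qed
  next
    fix a X' T' assume m: "\<mu> = ATau" and x: "trans X (AOut a) X'" "trans T (AIn a) T'" "W \<equiv>\<^sub>s Par X' T'"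
    then obtain Y' where "trans Y (AOut a) Y'" "async_bisim X' Y'" using st by blast
    then show ?thesis using x m by (simp add: Rel_def) (meson sc(1) trans_commr)
  qed
qed

lemma Rel_bisim: "async_bisimulation Rel"
  unfolding async_bisimulation_def
proof (intro conjI allI impI)
  fix P Q assume "Rel P Q" then show "Rel Q P" unfolding Rel_def using async_bisim_sym by blast
next
  fix P Q P' assume r: "Rel P Q" and t: "trans P ATau P'"
  then obtain X Y T where x: "P \<equiv>\<^sub>s Par X T" "Q \<equiv>\<^sub>s Par Y T" "async_bisim X Y" unfolding Rel_def by blast
  have "trans (Par X T) ATau P'" using t x sc(2) trans_l by blast
  from Rel_step[OF x(3) this] show "\<exists>Q'. trans Q ATau Q' \<and> Rel P' Q'" using x trans_l by blast
next
  fix P Q a P' assume r: "Rel P Q" and t: "trans P (AOut a) P'"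
  then obtain X Y T where x: "P \<equiv>\<^sub>s Par X T" "Q \<equiv>\<^sub>s Par Y T" "async_bisim X Y" unfolding Rel_def by blast
  have "trans (Par X T) (AOut a) P'" using t x sc(2) trans_l by blast
  from Rel_step[OF x(3) this] show "\<exists>Q'. trans Q (AOut a) Q' \<and> Rel P' Q'" using x trans_l by blast
next
  fix P Q a P' assume r: "Rel P Q" and t: "trans P (AIn a) P'"
  then obtain X Y T where x: "P \<equiv>\<^sub>s Par X T" "Q \<equiv>\<^sub>s Par Y T" "async_bisim X Y" unfolding Rel_def by blast
  have "trans (Par X T) (AIn a) P'" using t x sc(2) trans_l by blast
  from Rel_step[OF x(3) this]
  show "(\<exists>Q'. trans Q (AIn a) Q' \<and> Rel P' Q') \<or> (\<exists>Q'. trans Q ATau Q' \<and> Rel P' (Par Q' (Out a)))"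
    using x trans_l by blast
qed

lemma async_bisim_par: "async_bisim X Y \<Longrightarrow> P \<equiv>\<^sub>s Par X T \<Longrightarrow> Q \<equiv>\<^sub>s Par Y T \<Longrightarrow> async_bisim P Q"
proof -
  assume "async_bisim X Y" "P \<equiv>\<^sub>s Par X T" "Q \<equiv>\<^sub>s Par Y T"
  then have "Rel P Q" unfolding Rel_def by blast
  with Rel_bisim show ?thesis unfolding async_bisim_def by blast
qed

lemma async_bisim_scong: "async_bisim X Y \<Longrightarrow> P \<equiv>\<^sub>s X \<Longrightarrow> Q \<equiv>\<^sub>s Y \<Longrightarrow> async_bisim P Q"
  by (meson async_bisim_par sc(15) sc(2) sc(3))


lemma pure_Zero: "pure Zero" by simp

lemma ltsA_shape: "ltsA P C Q \<Longrightarrow> C = Hole \<or> (\<exists>a. C = HolePar (Out a)) \<or> (\<exists>a. C = HolePar (Sum (SIn a (Var 1))))"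
  by (induct rule: ltsA.induct) auto

lemma ltsAI_Hole: assumes "pure P" shows "ltsAI P Hole P' \<longleftrightarrow> red P P'"
proof
  assume "ltsAI P Hole P'"
  then obtain Ce Qe T where h: "ltsA P Ce Qe" "pure T" "subst T Qe \<equiv>\<^sub>s P'" "subst_ctx T Ce = Hole"
    unfolding ltsAI_def by blast
  have "Ce = Hole" using h(4) by (cases Ce) auto
  with h(1) have r: "red P Qe" by (cases rule: ltsA.cases) auto
  have "pure Qe" using red_pure[OF r assms] .
  with r show "red P P'" using h(3) subst_pure(1) red.struct sc(1) by metis
next
  assume r: "red P P'"
  have "pure P'" using red_pure[OF r assms] .
  then show "ltsAI P Hole P'" unfolding ltsAI_def
    using A_tau[OF r] capt_free_Zero(1) subst_pure(1) sc(1)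
    by (intro exI[of _ Hole] exI[of _ P'] exI[of _ Zero]) auto
qed

lemma syn_in_nf: "a \<notin> set A \<Longrightarrow> syn (ress A (Par (Sum (SChoice (SIn a Q) M)) R)) (AIn a) (ress A (Par Q R))"
  by (intro ress_syn sy_parl sy_sum s_l s_in) auto

lemma ltsAI_Out: assumes "pure P" shows "ltsAI P (HolePar (Out a)) P' \<longleftrightarrow> trans P (AIn a) P'"
proof
  assume "ltsAI P (HolePar (Out a)) P'"
  then obtain Ce Qe T where h: "ltsA P Ce Qe" "pure T" "subst T Qe \<equiv>\<^sub>s P'" "subst_ctx T Ce = HolePar (Out a)"
    unfolding ltsAI_def by blast
  from h(1) show "trans P (AIn a) P'"
  proof (cases rule: ltsA.cases)
    case (A_tau) then show ?thesis using h(4) by simp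
  next
    case (A_rcv A b Q M R)
    have ab: "b = a" using h(4) A_rcv by simp
    have "pure (ress A (Par (Sum (SChoice (SIn b Q) M)) R))" using A_rcv assms by (metis scong_pure(1))
    then have "pure Qe" using A_rcv by simp
    then have "Qe \<equiv>\<^sub>s P'" using h(3) subst_pure(1) by metis
    moreover have "trans P (AIn a) Qe" using syn_trans[OF syn_in_nf, of b A Q M R] A_rcv ab trans_l by blast
    ultimately show ?thesis using trans_r by blast
  next
    case (A_snd A b R) then show ?thesis using h(4) by simp
  qed
next
  assume "trans P (AIn a) P'"
  from trans_syn[OF this] obtain Z where z: "syn P (AIn a) Z" "Z \<equiv>\<^sub>s P'" by metis
  from nf_in[OF z(1) HOL.refl finite.emptyI] obtain A M R0 P0 where
    nf: "P \<equiv>\<^sub>s ress A (Par (Sum (SChoice (SIn a P0) M)) R0)" "Z \<equiv>\<^sub>s ress A (Par P0 R0)" "a \<notin> set A" by blast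
  have l: "ltsA P (HolePar (Out a)) (ress A (Par P0 R0))" using A_rcv[OF nf(1) nf(3)] .
  have "pure (ress A (Par (Sum (SChoice (SIn a P0) M)) R0))" using nf(1) assms scong_pure(1) by blast
  then have p: "pure (ress A (Par P0 R0))" by simp
  have "ress A (Par P0 R0) \<equiv>\<^sub>s P'" using nf(2) z(2) sc(2) sc(3) by blast
  then show "ltsAI P (HolePar (Out a)) P'" unfolding ltsAI_def
    using l p capt_free_Zero(1) subst_pure(1)[OF p]
    by (intro exI[of _ "HolePar (Out a)"] exI[of _ "ress A (Par P0 R0)"] exI[of _ Zero]) auto
qed

lemma ltsAI_Snd:
  assumes "pure P" "ltsAI P (HolePar (Sum (SIn a T))) P'"
  shows "\<exists>A P0. trans P (AOut a) (ress A P0) \<and> set A \<inter> fn T = {} \<and> P' \<equiv>\<^sub>s Par (ress A P0) T \<and> pure P0"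
proof -
  obtain Ce Qe T' where h: "ltsA P Ce Qe" "pure T'" "capt_free T' {} Qe" "subst T' Qe \<equiv>\<^sub>s P'"
    "subst_ctx T' Ce = HolePar (Sum (SIn a T))"
    using assms(2) unfolding ltsAI_def by blast
  from h(1) show ?thesis
  proof (cases rule: ltsA.cases)
    case (A_tau) then show ?thesis using h(5) by simp
  next
    case (A_rcv A b Q M R) then show ?thesis using h(5) by simp
  next
    case (A_snd A b P0)
    have ab: "b = a" "T' = T" using h(5) A_snd by simp_all
    have "pure (ress A (Par (Out b) P0))" using A_snd assms(1) by (metis scong_pure(1))
    then have p0: "pure P0" by simp
    have fr: "set A \<inter> fn T = {}" using h(3) A_snd ab capt_free_pure(1)[OF p0] by auto
    have "P' \<equiv>\<^sub>s ress A (Par P0 T)" using h(4) A_snd ab subst_pure(1)[OF p0] sc(2) by simp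
    also have "\<dots> \<equiv>\<^sub>s Par (ress A P0) T" using ress_extr[OF fr] .
    finally have 1: "P' \<equiv>\<^sub>s Par (ress A P0) T" .
    have "syn (ress A (Par (Out a) P0)) (AOut a) (ress A (Par Zero P0))"
      using A_snd ab by (intro ress_syn sy_parl sy_out) auto
    moreover have "ress A (Par Zero P0) \<equiv>\<^sub>s ress A P0" by (rule ress_cong) (meson sc(13) sc(15) sc(3))
    ultimately have "trans P (AOut a) (ress A P0)" using A_snd ab syn_trans trans_l trans_r by blast
    then show ?thesis using fr 1 p0 by blast
  qed
qed

lemma ltsAI_Snd_intro:
  assumes "pure P" "pure T" "trans P (AOut a) P1"
  shows "ltsAI P (HolePar (Sum (SIn a T))) (Par P1 T)"
proof -
  from trans_syn[OF assms(3)] obtain Z where z: "syn P (AOut a) Z" "Z \<equiv>\<^sub>s P1" by metis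
  have e: "P \<equiv>\<^sub>s ress [] (Par (Out a) Z)" using syn_out_inv[OF z(1) HOL.refl] by simp
  have l: "ltsA P (HolePar (Sum (SIn a (Var 1)))) (ress [] (Par Z (Var 1)))"
    by (rule A_snd[OF e]) simp
  have pz: "pure Z" using e assms(1) scong_pure(1) by fastforce
  have "Par Z T \<equiv>\<^sub>s Par P1 T" using z(2) by (simp add: sc(1) sc(9))
  then show ?thesis unfolding ltsAI_def using l assms(2) capt_free_pure(1)[OF pz] subst_pure(1)[OF pz]
    by (intro exI[of _ "HolePar (Sum (SIn a (Var 1)))"] exI[of _ "ress [] (Par Z (Var 1))"] exI[of _ T]) auto
qed

lemma ltsAI_shape: "ltsAI P C P' \<Longrightarrow> C = Hole \<or> (\<exists>a. C = HolePar (Out a)) \<or> (\<exists>a T. pure T \<and> C = HolePar (Sum (SIn a T)))"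
  unfolding ltsAI_def by (auto dest!: ltsA_shape)

lemma ltsAI_pure: "pure P \<Longrightarrow> ltsAI P C P' \<Longrightarrow> pure P'"
proof -
  assume p: "pure P" and l: "ltsAI P C P'"
  from ltsAI_shape[OF l] show "pure P'"
  proof (elim disjE exE conjE)
    assume "C = Hole" then show ?thesis using l ltsAI_Hole[OF p] red_pure p by blast
  next
    fix a assume "C = HolePar (Out a)" then show ?thesis using l ltsAI_Out[OF p] trans_pure p by blast
  next
    fix a T assume t: "pure T" "C = HolePar (Sum (SIn a T))"
    then obtain A P0 where "P' \<equiv>\<^sub>s Par (ress A P0) T" "pure P0" using ltsAI_Snd[OF p] l by blast
    then show ?thesis using t scong_pure(1) by fastforce
  qed
qed

lemma L_A_simps[simp]: "Hole \<in> L_A" "HolePar (Out a) \<notin> L_A" "(HolePar (Sum (SIn a T)) \<in> L_A) = pure T"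
  unfolding L_A_def by auto


lemma L_bisim_sym: "L_bisim L P Q \<Longrightarrow> L_bisim L Q P"
proof -
  assume "L_bisim L P Q"
  then obtain R where R: "L_bisimulation L R" "R P Q" unfolding L_bisim_def by blast
  then have "R Q P" unfolding L_bisimulation_def by blast
  with R(1) show ?thesis unfolding L_bisim_def by blast
qed

lemma L_bisim_step: "L_bisim L x y \<Longrightarrow> ltsAI x C x' \<Longrightarrow>
   (C \<in> L \<longrightarrow> (\<exists>y'. ltsAI y C y' \<and> L_bisim L x' y')) \<and> (C \<notin> L \<longrightarrow> (\<exists>y'. red (fill C y) y' \<and> L_bisim L x' y'))"
proof -
  assume "L_bisim L x y" and l: "ltsAI x C x'"
  then obtain R where R: "L_bisimulation L R" "R x y" unfolding L_bisim_def by blast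
  have sub: "R u v \<Longrightarrow> L_bisim L u v" for u v using R(1) unfolding L_bisim_def by blast
  have "if C \<in> L then (\<exists>y'. ltsAI y C y' \<and> R x' y') else (\<exists>y'. red (fill C y) y' \<and> R x' y')"
    using R l unfolding L_bisimulation_def by blast
  then show ?thesis using sub by (cases "C \<in> L") auto
qed

lemma ltsA_l: "x \<equiv>\<^sub>s x0 \<Longrightarrow> ltsA x0 C Q \<Longrightarrow> ltsA x C Q"
proof -
  assume e: "x \<equiv>\<^sub>s x0" and l: "ltsA x0 C Q"
  from l show "ltsA x C Q"
  proof (cases rule: ltsA.cases)
    case A_tau then show ?thesis using e by (meson ltsA.A_tau red.struct sc(1))
  next
    case (A_rcv A a Q0 M R) then show ?thesis using e by (metis ltsA.A_rcv sc(3))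
  next
    case (A_snd A a Q0) then show ?thesis using e by (metis ltsA.A_snd sc(3))
  qed
qed

lemma ltsAI_l: "x \<equiv>\<^sub>s x0 \<Longrightarrow> ltsAI x0 C x' \<Longrightarrow> ltsAI x C x'"
  unfolding ltsAI_def using ltsA_l by blast

lemma ltsAI_r: "ltsAI x C x' \<Longrightarrow> x' \<equiv>\<^sub>s x'' \<Longrightarrow> ltsAI x C x''"
  unfolding ltsAI_def using sc(3) by blast

lemma fill_scong: "y \<equiv>\<^sub>s y0 \<Longrightarrow> fill C y \<equiv>\<^sub>s fill C y0"
  by (cases C) (auto intro: sc(9) sc(1))

lemma L_bisim_scong: assumes "L_bisim L x0 y0" "x \<equiv>\<^sub>s x0" "y \<equiv>\<^sub>s y0" shows "L_bisim L x y"
proof -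
  define R where "R = (\<lambda>x y. \<exists>x0 y0. x \<equiv>\<^sub>s x0 \<and> y \<equiv>\<^sub>s y0 \<and> L_bisim L x0 y0)"
  have "L_bisimulation L R" unfolding L_bisimulation_def
  proof (intro conjI allI impI)
    fix x y assume "R x y" then show "R y x" unfolding R_def using L_bisim_sym by blast
  next
    fix x y C x' assume r: "R x y" and l: "ltsAI x C x'"
    then obtain x0 y0 where h: "x \<equiv>\<^sub>s x0" "y \<equiv>\<^sub>s y0" "L_bisim L x0 y0" unfolding R_def by blast
    have l0: "ltsAI x0 C x'" using ltsAI_l[OF sc(2)[OF h(1)] l] .
    note st = L_bisim_step[OF h(3) l0]
    show "if C \<in> L then \<exists>Q'. ltsAI y C Q' \<and> R x' Q' else \<exists>Q'. red (fill C y) Q' \<and> R x' Q'"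
    proof (cases "C \<in> L")
      case True
      then obtain y' where "ltsAI y0 C y'" "L_bisim L x' y'" using st by blast
      then have "ltsAI y C y'" "R x' y'" using ltsAI_l[OF h(2)] sc(1) unfolding R_def by blast+
      then show ?thesis using True by auto
    next
      case False
      then obtain y' where "red (fill C y0) y'" "L_bisim L x' y'" using st by blast
      then have "red (fill C y) y'" "R x' y'" using fill_scong[OF h(2)] red.struct sc(1) unfolding R_def by blast+
      then show ?thesis using False by auto
    qed
  qed
  moreover have "R x y" using assms unfolding R_def by blast
  ultimately show "L_bisim L x y" unfolding L_bisim_def by blast
qed

lemma trans_Out_tau: "\<not> trans (Out a) ATau T"
proof
  assume "trans (Out a) ATau T"
  from trans_syn[OF this] obtain Z where "syn (Out a) ATau Z" by metis
  then show False by (cases rule: syn.cases)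
qed

lemma trans_Out_in: "\<not> trans (Out a) (AIn b) T"
proof
  assume "trans (Out a) (AIn b) T"
  from trans_syn[OF this] obtain Z where "syn (Out a) (AIn b) Z" by metis
  then show False by (cases rule: syn.cases)
qed

lemma trans_Out_out: "trans (Out a) (AOut b) T \<Longrightarrow> T \<equiv>\<^sub>s Zero \<and> b = a"
proof -
  assume "trans (Out a) (AOut b) T"
  from trans_syn[OF this] obtain Z where z: "syn (Out a) (AOut b) Z" "Z \<equiv>\<^sub>s T" by metis
  from z(1) have "Z = Zero \<and> b = a" by (cases rule: syn.cases) auto
  then show ?thesis using z(2) sc(2) by blast
qed

lemma dirA: assumes "L_bisim L_A P Q" "pure P" "pure Q" shows "async_bisim P Q"
proof -
  define R where "R = (\<lambda>x y. pure x \<and> pure y \<and> L_bisim L_A x y)"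
  have "async_bisimulation R" unfolding async_bisimulation_def
  proof (intro conjI allI impI)
    fix x y assume "R x y" then show "R y x" unfolding R_def using L_bisim_sym by blast
  next
    fix x y x' assume r: "R x y" and t: "trans x ATau x'"
    then have px: "pure x" "pure y" "L_bisim L_A x y" unfolding R_def by auto
    have "ltsAI x Hole x'" using ltsAI_Hole[OF px(1)] t red_iff_trans by blast
    then obtain y' where "ltsAI y Hole y'" "L_bisim L_A x' y'" using L_bisim_step[OF px(3)] by fastforce
    then have "red y y'" "L_bisim L_A x' y'" using ltsAI_Hole[OF px(2)] by auto
    then show "\<exists>y'. trans y ATau y' \<and> R x' y'" unfolding R_def
      using red_iff_trans red_pure trans_pure t px by blast
  next
    fix x y a x' assume r: "R x y" and t: "trans x (AOut a) x'"
    then have px: "pure x" "pure y" "L_bisim L_A x y" unfolding R_def by auto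
    have px': "pure x'" using trans_pure t px by blast
    have "ltsAI x (HolePar (Sum (SIn a Zero))) (Par x' Zero)" using ltsAI_Snd_intro[OF px(1) pure_Zero t] .
    then obtain y'' where y'': "ltsAI y (HolePar (Sum (SIn a Zero))) y''" "L_bisim L_A (Par x' Zero) y''"
      using L_bisim_step[OF px(3)] by fastforce
    obtain A P0 where a: "trans y (AOut a) (ress A P0)" "y'' \<equiv>\<^sub>s Par (ress A P0) Zero"
      using ltsAI_Snd[OF px(2) y''(1)] by blast
    have "L_bisim L_A x' (ress A P0)"
      using L_bisim_scong[OF y''(2)] a(2) sc(2) sc(15) sc(3) by meson
    then show "\<exists>y'. trans y (AOut a) y' \<and> R x' y'" unfolding R_def using a(1) px px' trans_pure by blast
  next
    fix x y a x' assume r: "R x y" and t: "trans x (AIn a) x'"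
    then have px: "pure x" "pure y" "L_bisim L_A x y" unfolding R_def by auto
    have px': "pure x'" using trans_pure t px by blast
    have "ltsAI x (HolePar (Out a)) x'" using ltsAI_Out[OF px(1)] t by blast
    then obtain y'' where y'': "red (Par y (Out a)) y''" "L_bisim L_A x' y''"
      using L_bisim_step[OF px(3)] by fastforce
    have "trans (Par y (Out a)) ATau y''" using y''(1) red_iff_trans by blast
    from trans_par_inv[OF this]
    show "(\<exists>y'. trans y (AIn a) y' \<and> R x' y') \<or> (\<exists>y'. trans y ATau y' \<and> R x' (Par y' (Out a)))"
    proof (elim disjE exE conjE)
      fix y' assume "trans y ATau y'" "y'' \<equiv>\<^sub>s Par y' (Out a)"
      then show ?thesis unfolding R_def using L_bisim_scong[OF y''(2) sc(1)] sc(2) px px' trans_pure by fastforce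
    next
      fix T' assume "trans (Out a) ATau T'" then show ?thesis using trans_Out_tau by blast
    next
      fix b y' T' assume "trans y (AIn b) y'" "trans (Out a) (AOut b) T'" "y'' \<equiv>\<^sub>s Par y' T'"
      moreover have "b = a" "T' \<equiv>\<^sub>s Zero" using \<open>trans (Out a) (AOut b) T'\<close> trans_Out_out by blast+
      moreover have "y'' \<equiv>\<^sub>s y'" using calculation sc(9)[OF sc(1)] sc(15) sc(3) by meson
      ultimately show ?thesis unfolding R_def using L_bisim_scong[OF y''(2) sc(1)] sc(2) px px' trans_pure by blast
    next
      fix b y' T' assume "trans (Out a) (AIn b) T'" then show ?thesis using trans_Out_in by blast
    qed
  qed
  moreover have "R P Q" unfolding R_def using assms by blast
  ultimately show ?thesis unfolding async_bisim_def by blast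
qed

lemma dirB: assumes "async_bisim P Q" "pure P" "pure Q" shows "L_bisim L_A P Q"
proof -
  define R where "R = (\<lambda>x y. pure x \<and> pure y \<and> async_bisim x y)"
  have "L_bisimulation L_A R" unfolding L_bisimulation_def
  proof (intro conjI allI impI)
    fix x y assume "R x y" then show "R y x" unfolding R_def using async_bisim_sym by blast
  next
    fix x y C x' assume r: "R x y" and l: "ltsAI x C x'"
    then have px: "pure x" "pure y" "async_bisim x y" unfolding R_def by auto
    have px': "pure x'" using ltsAI_pure[OF px(1) l] .
    note st = async_bisim_step[OF px(3)]
    show "if C \<in> L_A then \<exists>Q'. ltsAI y C Q' \<and> R x' Q' else \<exists>Q'. red (fill C y) Q' \<and> R x' Q'"
    using ltsAI_shape[OF l]
    proof (elim disjE exE conjE)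
      assume c: "C = Hole"
      then have "trans x ATau x'" using l ltsAI_Hole[OF px(1)] red_iff_trans by blast
      then obtain y' where "trans y ATau y'" "async_bisim x' y'" using st by blast
      moreover have "pure y'" using calculation trans_pure px by blast
      ultimately show ?thesis using c ltsAI_Hole[OF px(2)] red_iff_trans px' unfolding R_def by auto
    next
      fix a assume c: "C = HolePar (Out a)"
      then have "trans x (AIn a) x'" using l ltsAI_Out[OF px(1)] by blast
      then have "(\<exists>y'. trans y (AIn a) y' \<and> async_bisim x' y') \<or>
             (\<exists>y'. trans y ATau y' \<and> async_bisim x' (Par y' (Out a)))" using st by blast
      then have "\<exists>Q'. red (Par y (Out a)) Q' \<and> R x' Q'"
      proof (elim disjE exE conjE)
        fix y' assume y: "trans y (AIn a) y'" "async_bisim x' y'"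
        have "trans (Par y (Out a)) ATau (Par y' Zero)" using t_comm[OF y(1) t_out] .
        then have "red (Par y (Out a)) y'" using red_iff_trans trans_r sc(15) by blast
        then show ?thesis unfolding R_def using y px px' trans_pure by blast
      next
        fix y' assume y: "trans y ATau y'" "async_bisim x' (Par y' (Out a))"
        have "red (Par y (Out a)) (Par y' (Out a))" using y(1) red_iff_trans red.par by blast
        moreover have "pure y'" using y trans_pure px by blast
        ultimately show ?thesis unfolding R_def using y px' by auto
      qed
      then show ?thesis using c by simp
    next
      fix a T assume pT: "pure T" and c: "C = HolePar (Sum (SIn a T))"
      obtain A P0 where a: "trans x (AOut a) (ress A P0)" "x' \<equiv>\<^sub>s Par (ress A P0) T"
        using ltsAI_Snd[OF px(1)] l c by blast
      then obtain y1 where y1: "trans y (AOut a) y1" "async_bisim (ress A P0) y1" using st by blast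
      have "ltsAI y C (Par y1 T)" using ltsAI_Snd_intro[OF px(2) pT y1(1)] c by simp
      moreover have "async_bisim x' (Par y1 T)" using async_bisim_par[OF y1(2) a(2) sc(1)] .
      moreover have "pure (Par y1 T)" using pT trans_pure y1 px by auto
      ultimately show ?thesis unfolding R_def using c pT px' by auto
    qed
  qed
  moreover have "R P Q" unfolding R_def using assms by blast
  ultimately show ?thesis unfolding L_bisim_def by blast
qed

theorem mainTheorem7:
  assumes "pure P" and "pure Q"
  shows "L_bisim L_A P Q \<longleftrightarrow> async_bisim P Q"
  using dirA dirB assms by blast


end
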